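(* For every $n\ge 3$, if $T$ is chosen uniformly at random from $\bigsqcup_{b\ge1,k\ge0,\,2b+k=n}\mathrm{SYT}^{+k}((b,b))$, the expected number of columns of $T$ (i.e. the expected value of $b$) is $\dfrac{n^2+n-6}{4n-6}$.
   Context: $\mathrm{SYT}^{+k}(\lambda)$: for a partition $\lambda$ of $N$ and $k\ge0$, the set of fillings of the cells of $\lambda$ by nonempty sets of positive integers forming a set partition of $[N+k]$, with $\max S(u)<\min S(v)$ whenever $u\ne v$ and $u$ is weakly northwest of $v$. The shape $(b,b)$ is the $2\times b$ rectangle. *)

theory Defs
  imports Complex_Main
begin

definition is_partition :: "nat list \<Rightarrow> bool" where
  "is_partition lam \<longleftrightarrow> sorted_wrt (\<ge>) lam \<and> (\<forall>x\<in>set lam. 0 < x)"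

text \<open>Cells of the Young diagram (English convention): row i, column j, 0-indexed.\<close>
definition cells :: "nat list \<Rightarrow> (nat \<times> nat) set" where
  "cells lam = {(i, j). i < length lam \<and> j < lam ! i}"

definition weakly_nw :: "nat \<times> nat \<Rightarrow> nat \<times> nat \<Rightarrow> bool" where
  "weakly_nw u v \<longleftrightarrow> fst u \<le> fst v \<and> snd u \<le> snd v"

definition SYT_plus :: "nat \<Rightarrow> nat list \<Rightarrow> (nat \<times> nat \<Rightarrow> nat set) set" where
  "SYT_plus k lam = {S.
     (\<forall>c. c \<notin> cells lam \<longrightarrow> S c = {}) \<and>
     (\<forall>c\<in>cells lam. S c \<noteq> {}) \<and>
     (\<forall>c\<in>cells lam. \<forall>d\<in>cells lam. c \<noteq> d \<longrightarrow> S c \<inter> S d = {}) \<and>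
     (\<Union>c\<in>cells lam. S c) = {1 .. sum_list lam + k} \<and>
     (\<forall>u\<in>cells lam. \<forall>v\<in>cells lam. u \<noteq> v \<and> weakly_nw u v \<longrightarrow> Max (S u) < Min (S v))}"

definition two_row_union :: "nat \<Rightarrow> (nat \<times> (nat \<times> nat \<Rightarrow> nat set)) set" where
  "two_row_union n = {(b, T). 1 \<le> b \<and> 2 * b \<le> n \<and> T \<in> SYT_plus (n - 2 * b) [b, b]}"

end

theory Submission
  imports Defs
begin


definition bb :: "int \<Rightarrow> int \<Rightarrow> int" where
  "bb n k = (if 0 \<le> k \<and> k \<le> n then int (nat n choose nat k) else 0)"

lemma bb_neg_n: "n < 0 \<Longrightarrow> bb n k = 0" by (simp add: bb_def)
lemma bb_neg_k: "k < 0 \<Longrightarrow> bb n k = 0" by (simp add: bb_def)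
lemma bb_big_k: "n < k \<Longrightarrow> bb n k = 0" by (simp add: bb_def)

lemma bb_pascal: assumes "0 \<le> n" shows "bb (n+1) k = bb n k + bb n (k-1)"
proof -
  consider "k < 0" | "k = 0" | "0 < k \<and> k \<le> n" | "k = n+1" | "k > n+1" by linarith
  then show ?thesis
  proof cases
    case 1 then show ?thesis by (simp add: bb_def)
  next
    case 2 then show ?thesis using assms by (simp add: bb_def)
  next
    case 3
    then obtain j where j: "nat k = Suc j" by (metis gr0_implies_Suc zero_less_nat_eq)
    have "nat (n+1) = Suc (nat n)" using assms by simp
    moreover have "nat (k-1) = j" using j by simp
    ultimately show ?thesis using 3 assms j by (simp add: bb_def)
  next
    case 4
    then show ?thesis using assms by (simp add: bb_def nat_add_distrib)
  next
    case 5 then show ?thesis by (simp add: bb_def)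
  qed
qed

lemma bb_sym: assumes "0 \<le> n" shows "bb n k = bb n (n - k)"
proof (cases "0 \<le> k \<and> k \<le> n")
  case True
  then have "nat (n-k) = nat n - nat k" by (simp add: nat_diff_distrib)
  moreover have "nat k \<le> nat n" using True by (simp add: nat_le_eq_zle)
  ultimately show ?thesis using True by (simp add: bb_def binomial_symmetric[of "nat k" "nat n"])
next
  case False then show ?thesis by (auto simp add: bb_def)
qed

lemma bb2: assumes "0 \<le> n" shows "bb (n+2) k = bb n k + 2*bb n (k-1) + bb n (k-2)"
proof -
  have "bb (n+2) k = bb ((n+1)+1) k" by (simp add: add.assoc)
  also have "\<dots> = bb (n+1) k + bb (n+1) (k-1)" using bb_pascal[of "n+1" k] assms by simp
  also have "\<dots> = bb n k + 2*bb n (k-1) + bb n (k-2)" using bb_pascal[of n] assms by simp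
  finally show ?thesis .
qed

definition P :: "int \<Rightarrow> int \<Rightarrow> int" where
  "P h L = bb (2*L) (L-h) - bb (2*L) (L-h-1)"

lemma P_rec: assumes "1 \<le> h" "0 \<le> L"
  shows "P h (L+1) = 2 * P h L + P (h+1) L + P (h-1) L"
proof -
  have e: "\<And>k. bb (2*(L+1)) k = bb (2*L) k + 2*bb (2*L) (k-1) + bb(2*L)(k-2)"
    using bb2[of "2*L"] assms by (simp add: algebra_simps)
  show ?thesis unfolding P_def e by (simp add: algebra_simps)
qed

lemma P_rec0: assumes "0 \<le> L"
  shows "P 0 (L+1) = P 0 L + P 1 L"
proof -
  have e: "\<And>k. bb (2*(L+1)) k = bb (2*L) k + 2*bb (2*L) (k-1) + bb(2*L)(k-2)"
    using bb2[of "2*L"] assms by (simp add: algebra_simps)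
  have s: "bb (2*L) (L+1) = bb (2*L) (L-1)" using bb_sym[of "2*L" "L+1"] assms by simp
  show ?thesis unfolding P_def e using s by (simp add: algebra_simps)
qed

lemma bb3: assumes "0 \<le> n" shows "bb (n+3) k = bb n k + 3*bb n (k-1) + 3*bb n (k-2) + bb n (k-3)"
proof -
  have "bb (n+3) k = bb ((n+1)+2) k" by (simp add: add.assoc)
  also have "\<dots> = bb (n+1) k + 2*bb (n+1) (k-1) + bb (n+1) (k-2)" using bb2[of "n+1" k] assms by simp
  also have "\<dots> = bb n k + 3*bb n (k-1) + 3*bb n (k-2) + bb n (k-3)" using bb_pascal[of n] assms by simp
  finally show ?thesis .
qed

definition Q :: "int \<Rightarrow> int \<Rightarrow> int" where
  "Q a L = bb (2*L-1) (L-a) - bb (2*L-1) (L-a-1)"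
definition PU :: "int \<Rightarrow> int \<Rightarrow> int" where
  "PU h L = (h+1)*bb (2*L-1) (L-h-2) - bb (2*L-1) (L-h-3) + bb (2*L-2) (L-h-4)"
definition QU :: "int \<Rightarrow> int \<Rightarrow> int" where
  "QU a L = (a+1)*bb (2*L-2) (L-a-2) - 2*bb (2*L-2) (L-a-3) + 2*bb (2*L-3) (L-a-4)"

lemma Q_rec: assumes "1 \<le> a" "1 \<le> L"
  shows "Q a (L+1) = Q (a+1) L + Q a L + P (a-1) L"
proof -
  have e1: "\<And>k. bb (2*(L+1)-1) k = bb (2*L-1) k + 2*bb (2*L-1) (k-1) + bb(2*L-1)(k-2)"
    using bb2[of "2*L-1"] assms by (simp add: algebra_simps)
  have e2: "\<And>k. bb (2*L) k = bb (2*L-1) k + bb (2*L-1) (k-1)"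
    using bb_pascal[of "2*L-1"] assms by (simp add: algebra_simps)
  show ?thesis unfolding Q_def P_def e1 e2 by (simp add: algebra_simps)
qed

lemma PU_rec: assumes "1 \<le> h" "1 \<le> L"
  shows "PU h (L+1) = 2 * PU h L + PU (h+1) L + P (h+1) L + PU (h-1) L"
proof -
  have e1: "\<And>k. bb (2*(L+1)-1) k = bb (2*L-2) k + 3*bb (2*L-2) (k-1) + 3*bb(2*L-2)(k-2) + bb (2*L-2) (k-3)"
    using bb3[of "2*L-2"] assms by (simp add: algebra_simps)
  have e2: "\<And>k. bb (2*(L+1)-2) k = bb (2*L-2) k + 2*bb (2*L-2) (k-1) + bb(2*L-2)(k-2)"
    using bb2[of "2*L-2"] assms by (simp add: algebra_simps)
  have e3: "\<And>k. bb (2*L) k = bb (2*L-2) k + 2*bb (2*L-2) (k-1) + bb(2*L-2)(k-2)"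
    using bb2[of "2*L-2"] assms by (simp add: algebra_simps)
  have e4: "\<And>k. bb (2*L-1) k = bb (2*L-2) k + bb (2*L-2) (k-1)"
    using bb_pascal[of "2*L-2"] assms by (simp add: algebra_simps)
  show ?thesis unfolding PU_def P_def e1 e2 e3 e4 by (simp add: algebra_simps)
qed

lemma QU_rec: assumes "1 \<le> a" "2 \<le> L"
  shows "QU a (L+1) = QU (a+1) L + Q (a+1) L + QU a L + PU (a-1) L"
proof -
  have e1: "\<And>k. bb (2*(L+1)-2) k = bb (2*L-3) k + 3*bb (2*L-3) (k-1) + 3*bb(2*L-3)(k-2) + bb (2*L-3) (k-3)"
    using bb3[of "2*L-3"] assms by (simp add: algebra_simps)
  have e2: "\<And>k. bb (2*(L+1)-3) k = bb (2*L-3) k + 2*bb (2*L-3) (k-1) + bb(2*L-3)(k-2)"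
    using bb2[of "2*L-3"] assms by (simp add: algebra_simps)
  have e3: "\<And>k. bb (2*L-1) k = bb (2*L-3) k + 2*bb (2*L-3) (k-1) + bb(2*L-3)(k-2)"
    using bb2[of "2*L-3"] assms by (simp add: algebra_simps)
  have e4: "\<And>k. bb (2*L-2) k = bb (2*L-3) k + bb (2*L-3) (k-1)"
    using bb_pascal[of "2*L-3"] assms by (simp add: algebra_simps)
  show ?thesis unfolding QU_def Q_def PU_def e1 e2 e3 e4 by (simp add: algebra_simps)
qed

lemma PU_rec0: assumes "1 \<le> L"
  shows "PU 0 (L+1) = PU 0 L + PU 1 L + P 1 L"
proof -
  have e1: "\<And>k. bb (2*(L+1)-1) k = bb (2*L-2) k + 3*bb (2*L-2) (k-1) + 3*bb(2*L-2)(k-2) + bb (2*L-2) (k-3)"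
    using bb3[of "2*L-2"] assms by (simp add: algebra_simps)
  have e2: "\<And>k. bb (2*(L+1)-2) k = bb (2*L-2) k + 2*bb (2*L-2) (k-1) + bb(2*L-2)(k-2)"
    using bb2[of "2*L-2"] assms by (simp add: algebra_simps)
  have e3: "\<And>k. bb (2*L) k = bb (2*L-2) k + 2*bb (2*L-2) (k-1) + bb(2*L-2)(k-2)"
    using bb2[of "2*L-2"] assms by (simp add: algebra_simps)
  have e4: "\<And>k. bb (2*L-1) k = bb (2*L-2) k + bb (2*L-2) (k-1)"
    using bb_pascal[of "2*L-2"] assms by (simp add: algebra_simps)
  show ?thesis unfolding PU_def P_def e1 e2 e3 e4 by (simp add: algebra_simps)
qed

lemma Q_rec_all: assumes "1 \<le> a" "0 \<le> L"
  shows "Q a (L+1) = Q (a+1) L + Q a L + P (a-1) L"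
proof (cases "L = 0")
  case True
  then show ?thesis using assms by (cases "a = 1") (auto simp: Q_def P_def bb_def)
next
  case False then show ?thesis using Q_rec assms by simp
qed

lemma PU_rec_all: assumes "0 \<le> h" "0 \<le> L"
  shows "PU h (L+1) = (if h = 0 then 1 else 2) * PU h L + PU (h+1) L + P (h+1) L + (if h = 0 then 0 else PU (h-1) L)"
proof (cases "L = 0")
  case True
  then show ?thesis using assms by (auto simp: PU_def P_def bb_def)
next
  case False then show ?thesis using PU_rec PU_rec0 assms by auto
qed

lemma QU_rec_all: assumes "1 \<le> a" "0 \<le> L"
  shows "QU a (L+1) = QU (a+1) L + Q (a+1) L + QU a L + PU (a-1) L"
proof -
  consider "L = 0" | "L = 1" | "2 \<le> L" using assms by linarith
  then show ?thesis
  proof cases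
    case 1 then show ?thesis using assms by (auto simp: QU_def Q_def PU_def bb_def)
  next
    case 2 then show ?thesis using assms by (auto simp: QU_def Q_def PU_def bb_def)
  next
    case 3 then show ?thesis using QU_rec assms by simp
  qed
qed

lemma bb_absorb: assumes "0 \<le> N" shows "(k+1) * bb N (k+1) = (N-k) * bb N k"
proof -
  consider "k < -1" | "k = -1" | "0 \<le> k \<and> k < N" | "k = N" | "k > N" by linarith
  then show ?thesis
  proof cases
    case 3
    then obtain kk NN where kk: "k = int kk" "N = int NN" using assms by (metis nonneg_int_cases)
    have e: "Suc kk * (NN choose Suc kk) = (NN - kk) * (NN choose kk)"
      using binomial_absorption[of kk NN] binomial_absorb_comp[of NN kk] by simp
    have "kk < NN" using 3 kk by simp
    then have "int (Suc kk * (NN choose Suc kk)) = int ((NN - kk) * (NN choose kk))" using e by simp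
    then show ?thesis using 3 kk \<open>kk < NN\<close> by (simp add: bb_def nat_add_distrib of_nat_diff algebra_simps)
  qed (use assms in \<open>auto simp: bb_def\<close>)
qed

lemma bb_nat: "bb (int n) (int k) = int (n choose k)"
  by (simp add: bb_def)

lemma bb_row: assumes "0 \<le> N" shows "(N+1-k) * bb (N+1) k = (N+1) * bb N k"
proof -
  consider "k < 0" | "0 \<le> k \<and> k \<le> N + 1" | "k > N + 1" by linarith
  then show ?thesis
  proof cases
    case 2
    then obtain kk NN where kk: "k = int kk" "N = int NN" using assms by (metis nonneg_int_cases)
    have e: "(Suc NN - kk) * (Suc NN choose kk) = Suc NN * (NN choose kk)"
      using binomial_absorb_comp[of "Suc NN" kk] by simp
    have "kk \<le> Suc NN" using 2 kk by simp
    then have e2: "(int (Suc NN) - int kk) * int (Suc NN choose kk) = int (Suc NN) * int (NN choose kk)"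
      using e by (metis of_nat_diff of_nat_mult)
    have "N + 1 = int (Suc NN)" using kk by simp
    moreover have "bb (int (Suc NN)) (int kk) = int (Suc NN choose kk)" by (rule bb_nat)
    ultimately show ?thesis using e2 kk bb_nat[of NN kk] by (simp add: algebra_simps)
  qed (use assms in \<open>auto simp: bb_def\<close>)
qed

lemma final_arith:
  fixes m :: int assumes m2: "2 \<le> m"
  shows "(real_of_int (Q 1 m) + real_of_int (QU 1 m)) / real_of_int (Q 1 m)
         = ((real_of_int m + 1)^2 + (real_of_int m + 1) - 6) / (4 * (real_of_int m + 1) - 6)"
proof -
  define X where "X = bb (2*m-2) (m-1)"
  define b1 where "b1 = bb (2*m-1) (m-1)"
  define b2 where "b2 = bb (2*m-1) (m-2)"
  define c0 where "c0 = bb (2*m-2) (m-2)"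
  define c1 where "c1 = bb (2*m-2) (m-3)"
  define c2 where "c2 = bb (2*m-2) (m-4)"
  define c3 where "c3 = bb (2*m-2) (m-5)"
  define d where "d = bb (2*m-3) (m-5)"
  have R1: "m * b1 = (2*m-1) * X"
    using bb_row[of "2*m-2" "m-1"] m2 unfolding b1_def X_def by (simp add: algebra_simps)
  have R2: "(m+1) * b2 = (m-1) * b1"
    using bb_absorb[of "2*m-1" "m-2"] m2 unfolding b1_def b2_def by (simp add: algebra_simps)
  have R3: "m * c0 = (m-1) * X"
    using bb_absorb[of "2*m-2" "m-2"] m2 unfolding c0_def X_def by (simp add: algebra_simps)
  have R4: "(m+1) * c1 = (m-2) * c0"
    using bb_absorb[of "2*m-2" "m-3"] m2 unfolding c0_def c1_def by (simp add: algebra_simps)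
  have R5: "(m+2) * c2 = (m-3) * c1"
    using bb_absorb[of "2*m-2" "m-4"] m2 unfolding c1_def c2_def by (simp add: algebra_simps)
  have R6: "(m+3) * c3 = (m-4) * c2"
    using bb_absorb[of "2*m-2" "m-5"] m2 unfolding c2_def c3_def by (simp add: algebra_simps)
  have R7: "(m+3) * c3 = (2*m-2) * d"
    using bb_row[of "2*m-3" "m-5"] m2 unfolding c3_def d_def by (simp add: algebra_simps)
  have Xpos: "X > 0" unfolding X_def bb_def using m2 by simp
  have Qe: "Q 1 m = b1 - b2" unfolding Q_def b1_def b2_def by (simp add: algebra_simps)
  have QUe: "QU 1 m = 2*c1 - 2*c2 + 2*d" unfolding QU_def c1_def c2_def d_def by (simp add: algebra_simps)
  have S1: "m*(m+1)*b2 = (m-1)*(2*m-1)*X" using R1 R2 by algebra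
  have SQ: "m*(m+1)*Q 1 m = 2*(2*m-1)*X" using Qe R1 S1 by algebra
  have S2: "m*(m+1)*c1 = (m-2)*(m-1)*X" using R3 R4 by algebra
  have S3: "m*(m+1)*(m+2)*c2 = (m-3)*(m-2)*(m-1)*X" using S2 R5 by algebra
  have S4: "m*(m+1)*(m+2)*(2*m-2)*d = (m-4)*(m-3)*(m-2)*(m-1)*X" using S3 R6 R7 by algebra
  have SQU: "m*(m+1)*(m+2)*(2*m-2)*QU 1 m = 2*(m+2)*(2*m-2)*(m-2)*(m-1)*X - 2*(2*m-2)*(m-3)*(m-2)*(m-1)*X
      + 2*(m-4)*(m-3)*(m-2)*(m-1)*X" using QUe S2 S3 S4 by algebra
  have Dnz: "m*(m+1)*(m+2)*(2*m-2) \<noteq> 0" using m2 by simp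
  have key0: "(m*(m+1)*(m+2)*(2*m-2)) * ((Q 1 m + QU 1 m)*(4*m-2) - Q 1 m * (m^2+3*m-4)) = 0"
    using SQ SQU by algebra
  have key: "(Q 1 m + QU 1 m)*(4*m-2) = Q 1 m * (m^2+3*m-4)" using key0 Dnz by simp
  have Qnz: "Q 1 m \<noteq> 0"
  proof
    assume "Q 1 m = 0"
    then have "2*(2*m-1)*X = 0" using SQ by simp
    then show False using Xpos m2 by simp
  qed
  have keyr: "(real_of_int (Q 1 m) + real_of_int (QU 1 m)) * (4 * (real_of_int m + 1) - 6)
      = ((real_of_int m + 1)^2 + (real_of_int m + 1) - 6) * real_of_int (Q 1 m)"
  proof -
    have "real_of_int ((Q 1 m + QU 1 m)*(4*m-2)) = real_of_int (Q 1 m * (m^2+3*m-4))" using key by simp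
    then show ?thesis by (simp add: algebra_simps power2_eq_square)
  qed
  have d2: "4 * (real_of_int m + 1) - 6 \<noteq> 0" using m2 by simp
  show ?thesis using keyr Qnz d2 by (simp add: frac_eq_eq)
qed



definition Yset :: "nat \<Rightarrow> (nat \<times> nat) set \<Rightarrow> (nat \<times> nat \<Rightarrow> nat set) set" where
  "Yset m C = {S.
     (\<forall>c. c \<notin> C \<longrightarrow> S c = {}) \<and>
     (\<forall>c\<in>C. S c \<noteq> {}) \<and>
     (\<forall>c\<in>C. \<forall>d\<in>C. c \<noteq> d \<longrightarrow> S c \<inter> S d = {}) \<and>
     (\<Union>c\<in>C. S c) = {1 .. m} \<and>
     (\<forall>u\<in>C. \<forall>v\<in>C. u \<noteq> v \<and> weakly_nw u v \<longrightarrow> Max (S u) < Min (S v))}"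

lemma SYT_plus_Yset: "SYT_plus k lam = Yset (sum_list lam + k) (cells lam)"
  unfolding SYT_plus_def Yset_def by simp

definition corner :: "(nat \<times> nat) set \<Rightarrow> nat \<times> nat \<Rightarrow> bool" where
  "corner C z \<longleftrightarrow> z \<in> C \<and> (\<forall>v\<in>C. v \<noteq> z \<longrightarrow> \<not> weakly_nw z v)"

lemma Yset_iff: "S \<in> Yset m C \<longleftrightarrow> (\<forall>c. c \<notin> C \<longrightarrow> S c = {}) \<and>
     (\<forall>c\<in>C. S c \<noteq> {}) \<and>
     (\<forall>c\<in>C. \<forall>d\<in>C. c \<noteq> d \<longrightarrow> S c \<inter> S d = {}) \<and>
     (\<Union>c\<in>C. S c) = {1 .. m} \<and>
     (\<forall>u\<in>C. \<forall>v\<in>C. u \<noteq> v \<and> weakly_nw u v \<longrightarrow> Max (S u) < Min (S v))"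
  unfolding Yset_def mem_Collect_eq by (rule refl)

lemma Yset_D1: assumes "S \<in> Yset m C" "c \<notin> C" shows "S c = {}"
proof -
  have "\<forall>c. c \<notin> C \<longrightarrow> S c = {}" using assms(1) unfolding Yset_iff by (rule conjunct1)
  then show ?thesis using assms(2) by blast
qed
lemma Yset_D2: assumes "S \<in> Yset m C" "c \<in> C" shows "S c \<noteq> {}"
proof -
  have "\<forall>c\<in>C. S c \<noteq> {}" using assms(1) unfolding Yset_iff by (elim conjE) assumption
  then show ?thesis using assms(2) by blast
qed
lemma Yset_D3: assumes "S \<in> Yset m C" "c \<in> C" "d \<in> C" "c \<noteq> d" shows "S c \<inter> S d = {}"
proof -
  have "\<forall>c\<in>C. \<forall>d\<in>C. c \<noteq> d \<longrightarrow> S c \<inter> S d = {}" using assms(1) unfolding Yset_iff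
    by (elim conjE) assumption
  then show ?thesis using assms(2-4) by blast
qed
lemma Yset_D4: assumes "S \<in> Yset m C" shows "(\<Union>c\<in>C. S c) = {1 .. m}"
  using assms unfolding Yset_iff by (elim conjE) assumption
lemma Yset_D5: assumes "S \<in> Yset m C" "u \<in> C" "v \<in> C" "u \<noteq> v" "weakly_nw u v" shows "Max (S u) < Min (S v)"
proof -
  have "\<forall>u\<in>C. \<forall>v\<in>C. u \<noteq> v \<and> weakly_nw u v \<longrightarrow> Max (S u) < Min (S v)" using assms(1) unfolding Yset_iff
    by (elim conjE) assumption
  then show ?thesis using assms(2-5) by blast
qed

lemma YsetI:
  assumes "\<And>c. c \<notin> C \<Longrightarrow> S c = {}" "\<And>c. c \<in> C \<Longrightarrow> S c \<noteq> {}"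
    "\<And>c d. c \<in> C \<Longrightarrow> d \<in> C \<Longrightarrow> c \<noteq> d \<Longrightarrow> S c \<inter> S d = {}"
    "(\<Union>c\<in>C. S c) = {1 .. m}"
    "\<And>u v. u \<in> C \<Longrightarrow> v \<in> C \<Longrightarrow> u \<noteq> v \<Longrightarrow> weakly_nw u v \<Longrightarrow> Max (S u) < Min (S v)"
  shows "S \<in> Yset m C"
  unfolding Yset_iff
proof (intro conjI)
  show "\<forall>c. c \<notin> C \<longrightarrow> S c = {}" using assms(1) by blast
  show "\<forall>c\<in>C. S c \<noteq> {}" using assms(2) by blast
  show "\<forall>c\<in>C. \<forall>d\<in>C. c \<noteq> d \<longrightarrow> S c \<inter> S d = {}" using assms(3) by blast
  show "(\<Union>c\<in>C. S c) = {1 .. m}" by (rule assms(4))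
  show "\<forall>u\<in>C. \<forall>v\<in>C. u \<noteq> v \<and> weakly_nw u v \<longrightarrow> Max (S u) < Min (S v)" using assms(5) by blast
qed

lemma Yset_sub: assumes "S \<in> Yset m C" shows "S c \<subseteq> {1..m}"
proof (cases "c \<in> C")
  case True
  then have "S c \<subseteq> (\<Union>c\<in>C. S c)" by blast
  then show ?thesis using Yset_D4[OF assms] by simp
next
  case False then show ?thesis using Yset_D1[OF assms] by simp
qed

lemma Yset_fin: "S \<in> Yset m C \<Longrightarrow> finite (S c)"
  by (meson Yset_sub finite_atLeastAtMost finite_subset)

lemma finite_Yset: "finite C \<Longrightarrow> finite (Yset m C)"
proof -
  assume fC: "finite C"
  have "Yset m C \<subseteq> {f. \<forall>x. (x \<in> C \<longrightarrow> f x \<in> Pow {1..m}) \<and> (x \<notin> C \<longrightarrow> f x = {})}"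
  proof
    fix S assume S: "S \<in> Yset m C"
    have "\<forall>x. (x \<in> C \<longrightarrow> S x \<in> Pow {1..m}) \<and> (x \<notin> C \<longrightarrow> S x = {})"
    proof (intro allI conjI impI)
      fix x show "S x \<in> Pow {1..m}" using Yset_sub[OF S, of x] by simp
    next
      fix x assume "x \<notin> C" then show "S x = {}" using Yset_D1[OF S] by simp
    qed
    then show "S \<in> {f. \<forall>x. (x \<in> C \<longrightarrow> f x \<in> Pow {1..m}) \<and> (x \<notin> C \<longrightarrow> f x = {})}" by simp
  qed
  moreover have "finite {f. \<forall>x. (x \<in> C \<longrightarrow> f x \<in> Pow {1..m}) \<and> (x \<notin> C \<longrightarrow> f x = ({}::nat set))}"
    by (rule finite_set_of_finite_funs) (use fC in auto)
  ultimately show ?thesis using finite_subset by blast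
qed

lemma Yset_card_le: assumes "S \<in> Yset m C" "finite C" shows "card C \<le> m"
proof -
  have inj: "inj_on (\<lambda>c. Min (S c)) C"
  proof (rule inj_onI)
    fix c d assume cd: "c \<in> C" "d \<in> C" "Min (S c) = Min (S d)"
    have "Min (S c) \<in> S c" using Yset_D2[OF assms(1) cd(1)] Yset_fin[OF assms(1)] by simp
    moreover have "Min (S d) \<in> S d" using Yset_D2[OF assms(1) cd(2)] Yset_fin[OF assms(1)] by simp
    ultimately show "c = d" using Yset_D3[OF assms(1) cd(1,2)] cd(3) by auto
  qed
  have "(\<lambda>c. Min (S c)) ` C \<subseteq> {1..m}"
  proof
    fix x assume "x \<in> (\<lambda>c. Min (S c)) ` C"
    then obtain c where c: "c \<in> C" "x = Min (S c)" by auto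
    have "x \<in> S c" using c Yset_D2[OF assms(1) c(1)] Yset_fin[OF assms(1)] by simp
    then show "x \<in> {1..m}" using Yset_sub[OF assms(1), of c] by blast
  qed
  from card_inj_on_le[OF inj this] show ?thesis by simp
qed

lemma Yset_m_corner:
  assumes S: "S \<in> Yset m C" and mz: "m \<in> S z"
  shows "corner C z"
proof -
  have zC: "z \<in> C" using S mz Yset_D1 by blast
  show ?thesis unfolding corner_def
  proof (intro conjI zC ballI impI)
    fix v assume v: "v \<in> C" "v \<noteq> z"
    show "\<not> weakly_nw z v"
    proof
      assume nw: "weakly_nw z v"
      have lt: "Max (S z) < Min (S v)" using Yset_D5[OF S zC v(1)] v(2) nw by auto
      have "m \<le> Max (S z)" using mz Yset_fin[OF S] by auto
      moreover have "Min (S v) \<in> S v" using Yset_D2[OF S v(1)] Yset_fin[OF S] by simp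
      then have "Min (S v) \<le> m" using Yset_sub[OF S, of v] by auto
      ultimately show False using lt by simp
    qed
  qed
qed

definition Aset :: "nat \<Rightarrow> (nat \<times> nat) set \<Rightarrow> nat \<times> nat \<Rightarrow> (nat \<times> nat \<Rightarrow> nat set) set" where
  "Aset m C z = {S \<in> Yset m C. S z = {m}}"
definition Bset :: "nat \<Rightarrow> (nat \<times> nat) set \<Rightarrow> nat \<times> nat \<Rightarrow> (nat \<times> nat \<Rightarrow> nat set) set" where
  "Bset m C z = {S \<in> Yset m C. m \<in> S z \<and> S z \<noteq> {m}}"

lemma Yset_max_le: assumes "S \<in> Yset m C" "c \<in> C" shows "Max (S c) \<le> m"
  using Yset_sub[OF assms(1), of c] Yset_D2[OF assms] Yset_fin[OF assms(1), of c]
  by (meson Max_in atLeastAtMost_iff subsetD)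

lemma Yset_min_in: assumes "S \<in> Yset m C" "c \<in> C" shows "Min (S c) \<in> S c"
  using Yset_D2[OF assms] Yset_fin[OF assms(1), of c] by simp

lemma A_bij:
  assumes cz: "corner C z" and m1: "1 \<le> m"
  shows "bij_betw (\<lambda>S. S(z := {})) (Aset m C z) (Yset (m-1) (C - {z}))"
proof (rule bij_betw_byWitness[where f' = "\<lambda>T. T(z := {m})"])
  have zC: "z \<in> C" using cz unfolding corner_def by simp
  show "\<forall>S\<in>Aset m C z. S(z := {}, z := {m}) = S"
  proof
    fix S assume "S \<in> Aset m C z"
    then have "S z = {m}" unfolding Aset_def by simp
    then show "S(z := {}, z := {m}) = S" by (simp add: fun_upd_idem)
  qed
  show "\<forall>T\<in>Yset (m-1) (C - {z}). T(z := {m}, z := {}) = T"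
  proof
    fix T assume T: "T \<in> Yset (m-1) (C - {z})"
    have "T z = {}" using Yset_D1[OF T] by simp
    then show "T(z := {m}, z := {}) = T" by (simp add: fun_upd_idem)
  qed
  show "(\<lambda>S. S(z := {})) ` Aset m C z \<subseteq> Yset (m-1) (C - {z})"
  proof
    fix T assume "T \<in> (\<lambda>S. S(z := {})) ` Aset m C z"
    then obtain S where S: "S \<in> Yset m C" "S z = {m}" and TS: "T = S(z := {})"
      unfolding Aset_def by auto
    show "T \<in> Yset (m-1) (C - {z})"
    proof (rule YsetI)
      fix c assume "c \<notin> C - {z}" then show "T c = {}"
        using Yset_D1[OF S(1), of c] TS by (cases "c = z") auto
    next
      fix c assume "c \<in> C - {z}" then show "T c \<noteq> {}" using Yset_D2[OF S(1), of c] TS by auto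
    next
      fix c d assume "c \<in> C - {z}" "d \<in> C - {z}" "c \<noteq> d"
      then show "T c \<inter> T d = {}" using Yset_D3[OF S(1), of c d] TS by auto
    next
      show "(\<Union>c\<in>C - {z}. T c) = {1 .. m-1}"
      proof
        show "(\<Union>c\<in>C - {z}. T c) \<subseteq> {1 .. m-1}"
        proof
          fix x assume "x \<in> (\<Union>c\<in>C - {z}. T c)"
          then obtain c where c: "c \<in> C" "c \<noteq> z" "x \<in> S c" using TS by auto
          have "x \<in> {1..m}" using Yset_sub[OF S(1), of c] c by blast
          moreover have "x \<noteq> m" using Yset_D3[OF S(1) c(1) zC c(2)] S(2) c(3) by auto
          ultimately show "x \<in> {1..m-1}" by auto
        qed
      next
        show "{1 .. m-1} \<subseteq> (\<Union>c\<in>C - {z}. T c)"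
        proof
          fix x assume x: "x \<in> {1..m-1}"
          then have "x \<in> (\<Union>c\<in>C. S c)" using Yset_D4[OF S(1)] by auto
          then obtain c where c: "c \<in> C" "x \<in> S c" by auto
          have "c \<noteq> z" using c x S(2) by auto
          then show "x \<in> (\<Union>c\<in>C - {z}. T c)" using c TS by auto
        qed
      qed
    next
      fix u v assume "u \<in> C - {z}" "v \<in> C - {z}" "u \<noteq> v" "weakly_nw u v"
      then show "Max (T u) < Min (T v)" using Yset_D5[OF S(1), of u v] TS by auto
    qed
  qed
  show "(\<lambda>T. T(z := {m})) ` Yset (m-1) (C - {z}) \<subseteq> Aset m C z"
  proof
    fix S assume "S \<in> (\<lambda>T. T(z := {m})) ` Yset (m-1) (C - {z})"
    then obtain T where T: "T \<in> Yset (m-1) (C - {z})" and ST: "S = T(z := {m})" by auto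
    have Tsub: "\<And>c. T c \<subseteq> {1..m-1}" using Yset_sub[OF T] by blast
    have mT: "\<And>c. m \<notin> T c" using Tsub m1 by fastforce
    have "S \<in> Yset m C"
    proof (rule YsetI)
      fix c assume "c \<notin> C" then show "S c = {}" using zC Yset_D1[OF T, of c] ST by auto
    next
      fix c assume "c \<in> C" then show "S c \<noteq> {}" using Yset_D2[OF T, of c] ST by (cases "c = z") auto
    next
      fix c d assume cd: "c \<in> C" "d \<in> C" "c \<noteq> d"
      show "S c \<inter> S d = {}"
      proof (cases "c = z \<or> d = z")
        case True then show ?thesis using mT ST cd(3) by auto
      next
        case False then show ?thesis using Yset_D3[OF T, of c d] cd ST by auto
      qed
    next
      have "C = insert z (C - {z})" using zC by auto
      then have "(\<Union>c\<in>C. S c) = S z \<union> (\<Union>c\<in>C - {z}. S c)" by blast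
      also have "(\<Union>c\<in>C - {z}. S c) = (\<Union>c\<in>C - {z}. T c)" using ST by auto
      also have "\<dots> = {1..m-1}" using Yset_D4[OF T] .
      finally show "(\<Union>c\<in>C. S c) = {1 .. m}" using ST m1 by auto
    next
      fix u v assume uv: "u \<in> C" "v \<in> C" "u \<noteq> v" "weakly_nw u v"
      have uz: "u \<noteq> z" using cz uv unfolding corner_def by auto
      show "Max (S u) < Min (S v)"
      proof (cases "v = z")
        case True
        have "Max (T u) \<le> m - 1" using Yset_max_le[OF T, of u] uv uz by simp
        then show ?thesis using True ST uz m1 by simp
      next
        case False then show ?thesis using Yset_D5[OF T, of u v] uv uz ST by auto
      qed
    qed
    then show "S \<in> Aset m C z" unfolding Aset_def using ST by simp
  qed
qed

lemma B_bij:
  assumes cz: "corner C z" and m1: "1 \<le> m"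
  shows "bij_betw (\<lambda>S. S(z := S z - {m})) (Bset m C z) (Yset (m-1) C)"
proof (rule bij_betw_byWitness[where f' = "\<lambda>T. T(z := insert m (T z))"])
  have zC: "z \<in> C" using cz unfolding corner_def by simp
  show "\<forall>S\<in>Bset m C z. (S(z := S z - {m}))(z := insert m ((S(z := S z - {m})) z)) = S"
  proof
    fix S assume "S \<in> Bset m C z"
    then have "m \<in> S z" unfolding Bset_def by simp
    then have "insert m (S z - {m}) = S z" by auto
    then show "(S(z := S z - {m}))(z := insert m ((S(z := S z - {m})) z)) = S" by (simp add: fun_upd_idem)
  qed
  show "\<forall>T\<in>Yset (m-1) C. (T(z := insert m (T z)))(z := (T(z := insert m (T z))) z - {m}) = T"
  proof
    fix T assume T: "T \<in> Yset (m-1) C"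
    have "m \<notin> T z" using Yset_sub[OF T, of z] m1 by auto
    then have "insert m (T z) - {m} = T z" by auto
    then show "(T(z := insert m (T z)))(z := (T(z := insert m (T z))) z - {m}) = T" by (simp add: fun_upd_idem)
  qed
  show "(\<lambda>S. S(z := S z - {m})) ` Bset m C z \<subseteq> Yset (m-1) C"
  proof
    fix T assume "T \<in> (\<lambda>S. S(z := S z - {m})) ` Bset m C z"
    then obtain S where S: "S \<in> Yset m C" "m \<in> S z" "S z \<noteq> {m}" and TS: "T = S(z := S z - {m})"
      unfolding Bset_def by auto
    have mc: "\<And>c. c \<in> C \<Longrightarrow> c \<noteq> z \<Longrightarrow> m \<notin> S c" using Yset_D3[OF S(1) _ zC] S(2) by blast
    show "T \<in> Yset (m-1) C"
    proof (rule YsetI)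
      fix c assume "c \<notin> C" then show "T c = {}"
        using Yset_D1[OF S(1), of c] TS zC by auto
    next
      fix c assume "c \<in> C" then show "T c \<noteq> {}" using Yset_D2[OF S(1), of c] TS S(2,3) by auto
    next
      fix c d assume "c \<in> C" "d \<in> C" "c \<noteq> d"
      then show "T c \<inter> T d = {}" using Yset_D3[OF S(1), of c d] TS by auto
    next
      show "(\<Union>c\<in>C. T c) = {1 .. m-1}"
      proof
        show "(\<Union>c\<in>C. T c) \<subseteq> {1 .. m-1}"
        proof
          fix x assume "x \<in> (\<Union>c\<in>C. T c)"
          then obtain c where c: "c \<in> C" "x \<in> T c" by auto
          have "x \<in> S c" using c TS by (cases "c = z") auto
          then have "x \<in> {1..m}" using Yset_sub[OF S(1), of c] by blast
          moreover have "x \<noteq> m"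
          proof (cases "c = z")
            case True then show ?thesis using c TS by auto
          next
            case False then show ?thesis using c TS mc[OF c(1) False] by auto
          qed
          ultimately show "x \<in> {1..m-1}" by auto
        qed
      next
        show "{1 .. m-1} \<subseteq> (\<Union>c\<in>C. T c)"
        proof
          fix x assume x: "x \<in> {1..m-1}"
          then have "x \<in> (\<Union>c\<in>C. S c)" using Yset_D4[OF S(1)] by auto
          then obtain c where c: "c \<in> C" "x \<in> S c" by auto
          have "x \<in> T c" using c x TS by auto
          then show "x \<in> (\<Union>c\<in>C. T c)" using c by auto
        qed
      qed
    next
      fix u v assume uv: "u \<in> C" "v \<in> C" "u \<noteq> v" "weakly_nw u v"
      have uz: "u \<noteq> z" using cz uv unfolding corner_def by auto
      show "Max (T u) < Min (T v)"
      proof (cases "v = z")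
        case True
        have ne: "S z - {m} \<noteq> {}" using S(2,3) by auto
        have fin: "finite (S z - {m})" using Yset_fin[OF S(1)] by simp
        have "Min (S z) \<le> Min (S z - {m})" using ne fin Yset_fin[OF S(1), of z]
          by (simp add: Min_antimono)
        moreover have "Max (S u) < Min (S z)" using Yset_D5[OF S(1) uv(1) zC] uv True by auto
        ultimately show ?thesis using True TS uz by simp
      next
        case False then show ?thesis using Yset_D5[OF S(1), of u v] uv uz TS by auto
      qed
    qed
  qed
  show "(\<lambda>T. T(z := insert m (T z))) ` Yset (m-1) C \<subseteq> Bset m C z"
  proof
    fix S assume "S \<in> (\<lambda>T. T(z := insert m (T z))) ` Yset (m-1) C"
    then obtain T where T: "T \<in> Yset (m-1) C" and ST: "S = T(z := insert m (T z))" by auto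
    have Tsub: "\<And>c. T c \<subseteq> {1..m-1}" using Yset_sub[OF T] by blast
    have mT: "\<And>c. m \<notin> T c" using Tsub m1 by fastforce
    have Tz: "T z \<noteq> {}" using Yset_D2[OF T zC] .
    have "S \<in> Yset m C"
    proof (rule YsetI)
      fix c assume "c \<notin> C" then show "S c = {}" using zC Yset_D1[OF T, of c] ST by auto
    next
      fix c assume "c \<in> C" then show "S c \<noteq> {}" using Yset_D2[OF T, of c] ST by (cases "c = z") auto
    next
      fix c d assume cd: "c \<in> C" "d \<in> C" "c \<noteq> d"
      then show "S c \<inter> S d = {}" using mT ST Yset_D3[OF T, of c d] by auto
    next
      have "(\<Union>c\<in>C. S c) = insert m (\<Union>c\<in>C. T c)"
      proof
        show "(\<Union>c\<in>C. S c) \<subseteq> insert m (\<Union>c\<in>C. T c)" using ST by auto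
        show "insert m (\<Union>c\<in>C. T c) \<subseteq> (\<Union>c\<in>C. S c)"
        proof
          fix x assume "x \<in> insert m (\<Union>c\<in>C. T c)"
          then show "x \<in> (\<Union>c\<in>C. S c)"
          proof
            assume "x = m" then show ?thesis using zC ST by auto
          next
            assume "x \<in> (\<Union>c\<in>C. T c)"
            then obtain c where "c \<in> C" "x \<in> T c" by auto
            then show ?thesis using ST by (cases "c = z") auto
          qed
        qed
      qed
      also have "\<dots> = {1..m}" using Yset_D4[OF T] m1 by auto
      finally show "(\<Union>c\<in>C. S c) = {1 .. m}" .
    next
      fix u v assume uv: "u \<in> C" "v \<in> C" "u \<noteq> v" "weakly_nw u v"
      have uz: "u \<noteq> z" using cz uv unfolding corner_def by auto
      show "Max (S u) < Min (S v)"
      proof (cases "v = z")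
        case True
        have lt: "Max (T u) < Min (T z)" using Yset_D5[OF T uv(1) zC] uv True by auto
        have fin: "finite (T z)" using Yset_fin[OF T] by simp
        have "Min (T z) \<le> m - 1" using Yset_sub[OF T, of z] Yset_min_in[OF T zC] by auto
        moreover have "Min (insert m (T z)) = min m (Min (T z))" using fin Tz by (rule Min_insert)
        ultimately have "Min (insert m (T z)) = Min (T z)" using m1 by simp
        then show ?thesis using True ST uz lt by simp
      next
        case False then show ?thesis using Yset_D5[OF T, of u v] uv uz ST by auto
      qed
    qed
    moreover have "m \<in> S z" using ST by simp
    moreover have "S z \<noteq> {m}"
    proof
      assume "S z = {m}"
      then have "T z \<subseteq> {m}" using ST by auto
      then show False using Tz mT[of z] by blast
    qed
    ultimately show "S \<in> Bset m C z" unfolding Bset_def by simp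
  qed
qed

lemma Yset_card_rec:
  assumes fC: "finite C" and m1: "1 \<le> m"
  shows "card (Yset m C) = (\<Sum>z\<in>{z. corner C z}. card (Yset (m-1) (C - {z})) + card (Yset (m-1) C))"
proof -
  let ?I = "{z. corner C z}"
  have fI: "finite ?I" using fC finite_subset[of ?I C] unfolding corner_def by blast
  have split: "Yset m C = (\<Union>z\<in>?I. Aset m C z \<union> Bset m C z)"
  proof
    show "Yset m C \<subseteq> (\<Union>z\<in>?I. Aset m C z \<union> Bset m C z)"
    proof
      fix S assume S: "S \<in> Yset m C"
      have "m \<in> (\<Union>c\<in>C. S c)" using Yset_D4[OF S] m1 by auto
      then obtain z where z: "z \<in> C" "m \<in> S z" by auto
      have "corner C z" using Yset_m_corner[OF S z(2)] .
      moreover have "S \<in> Aset m C z \<union> Bset m C z" using S z unfolding Aset_def Bset_def by auto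
      ultimately show "S \<in> (\<Union>z\<in>?I. Aset m C z \<union> Bset m C z)" by (intro UN_I[of z]) auto
    qed
    show "(\<Union>z\<in>?I. Aset m C z \<union> Bset m C z) \<subseteq> Yset m C"
      unfolding Aset_def Bset_def by auto
  qed
  have fin: "\<And>z. finite (Aset m C z)" "\<And>z. finite (Bset m C z)"
    using finite_Yset[OF fC, of m] unfolding Aset_def Bset_def by auto
  have disj: "\<forall>i\<in>?I. \<forall>j\<in>?I. i \<noteq> j \<longrightarrow> (Aset m C i \<union> Bset m C i) \<inter> (Aset m C j \<union> Bset m C j) = {}"
  proof (intro ballI impI)
    fix i j assume ij: "i \<in> ?I" "j \<in> ?I" "i \<noteq> j"
    have iC: "i \<in> C" "j \<in> C" using ij unfolding corner_def by auto
    show "(Aset m C i \<union> Bset m C i) \<inter> (Aset m C j \<union> Bset m C j) = {}"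
    proof (rule ccontr)
      assume "(Aset m C i \<union> Bset m C i) \<inter> (Aset m C j \<union> Bset m C j) \<noteq> {}"
      then obtain S where S: "S \<in> Yset m C" "m \<in> S i" "m \<in> S j" unfolding Aset_def Bset_def by auto
      show False using Yset_D3[OF S(1) iC ij(3)] S(2,3) by auto
    qed
  qed
  have "card (Yset m C) = (\<Sum>z\<in>?I. card (Aset m C z \<union> Bset m C z))"
    unfolding split by (rule card_UN_disjoint[OF fI _ disj]) (use fin in auto)
  also have "\<dots> = (\<Sum>z\<in>?I. card (Aset m C z) + card (Bset m C z))"
  proof (rule sum.cong[OF refl])
    fix z assume "z \<in> ?I"
    have "Aset m C z \<inter> Bset m C z = {}" unfolding Aset_def Bset_def by auto
    then show "card (Aset m C z \<union> Bset m C z) = card (Aset m C z) + card (Bset m C z)"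
      using fin card_Un_disjoint by blast
  qed
  also have "\<dots> = (\<Sum>z\<in>?I. card (Yset (m-1) (C - {z})) + card (Yset (m-1) C))"
  proof (rule sum.cong[OF refl])
    fix z assume "z \<in> ?I"
    then have cz: "corner C z" by simp
    show "card (Aset m C z) + card (Bset m C z) = card (Yset (m-1) (C - {z})) + card (Yset (m-1) C)"
      using bij_betw_same_card[OF A_bij[OF cz m1]] bij_betw_same_card[OF B_bij[OF cz m1]] by simp
  qed
  finally show ?thesis .
qed

lemma cells2: "cells [a, c] = (\<lambda>j. (0::nat, j)) ` {..<a} \<union> (\<lambda>j. (1::nat, j)) ` {..<c}"
proof
  show "cells [a, c] \<subseteq> (\<lambda>j. (0::nat, j)) ` {..<a} \<union> (\<lambda>j. (1::nat, j)) ` {..<c}"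
  proof
    fix z assume "z \<in> cells [a, c]"
    then obtain i j where z: "z = (i, j)" "i < 2" "j < [a, c] ! i" unfolding cells_def by auto
    then have "i = 0 \<or> i = 1" by auto
    then show "z \<in> (\<lambda>j. (0::nat, j)) ` {..<a} \<union> (\<lambda>j. (1::nat, j)) ` {..<c}" using z by auto
  qed
  show "(\<lambda>j. (0::nat, j)) ` {..<a} \<union> (\<lambda>j. (1::nat, j)) ` {..<c} \<subseteq> cells [a, c]"
    unfolding cells_def by auto
qed

lemma cells2_mem: "(i, j) \<in> cells [a, c] \<longleftrightarrow> (i = 0 \<and> j < a) \<or> (i = 1 \<and> j < c)"
  unfolding cells2 by auto

lemma finite_cells2: "finite (cells [a, c])"
  unfolding cells2 by simp

lemma card_cells2: "card (cells [a, c]) = a + c"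
proof -
  have "card ((\<lambda>j. (0::nat, j)) ` {..<a} \<union> (\<lambda>j. (1::nat, j)) ` {..<c}) =
        card ((\<lambda>j. (0::nat, j)) ` {..<a}) + card ((\<lambda>j. (1::nat, j)) ` {..<c})"
    by (rule card_Un_disjoint) auto
  also have "\<dots> = a + c" by (simp add: card_image inj_on_def)
  finally show ?thesis unfolding cells2 .
qed

lemma corners2:
  assumes "c \<le> a"
  shows "{z. corner (cells [a, c]) z} = (if c < a then {(0::nat, a-1)} else {}) \<union> (if 1 \<le> c then {(1::nat, c-1)} else {})"
proof
  show "{z. corner (cells [a, c]) z} \<subseteq> (if c < a then {(0::nat, a-1)} else {}) \<union> (if 1 \<le> c then {(1::nat, c-1)} else {})"
  proof
    fix z assume "z \<in> {z. corner (cells [a, c]) z}"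
    then have cz: "corner (cells [a, c]) z" by simp
    obtain i j where z: "z = (i, j)" by (cases z)
    have "(i, j) \<in> cells [a, c]" using cz z unfolding corner_def by simp
    then have zc: "(i = 0 \<and> j < a) \<or> (i = 1 \<and> j < c)" by (simp only: cells2_mem)
    have nc: "\<And>i' j'. (i', j') \<in> cells [a, c] \<Longrightarrow> (i', j') \<noteq> (i, j) \<Longrightarrow> \<not> (i \<le> i' \<and> j \<le> j')"
      using cz z unfolding corner_def weakly_nw_def by auto
    show "z \<in> (if c < a then {(0::nat, a-1)} else {}) \<union> (if 1 \<le> c then {(1::nat, c-1)} else {})"
    proof (cases "i = 0")
      case True
      then have ja: "j < a" using zc by simp
      have "\<not> j < a - 1"
      proof
        assume "j < a - 1"
        then have "Suc j < a" by arith
        then show False using nc[of 0 "j+1"] True by (simp add: cells2_mem weakly_nw_def)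
      qed
      then have j: "j = a - 1" using ja by simp
      have "c < a"
      proof (rule ccontr)
        assume "\<not> c < a"
        then have "c = a" using assms by simp
        then show False using nc[of 1 j] True ja by (simp add: cells2_mem)
      qed
      then show ?thesis using z True j by simp
    next
      case False
      then have i1: "i = 1" and jc: "j < c" using zc by auto
      have "\<not> j < c - 1"
      proof
        assume "j < c - 1"
        then have "Suc j < c" by arith
        then show False using nc[of 1 "j+1"] i1 by (simp add: cells2_mem)
      qed
      then have "j = c - 1" using jc by simp
      then show ?thesis using z i1 jc by simp
    qed
  qed
  show "(if c < a then {(0::nat, a-1)} else {}) \<union> (if 1 \<le> c then {(1::nat, c-1)} else {}) \<subseteq> {z. corner (cells [a, c]) z}"
  proof
    fix z assume z: "z \<in> (if c < a then {(0::nat, a-1)} else {}) \<union> (if 1 \<le> c then {(1::nat, c-1)} else {})"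
    show "z \<in> {z. corner (cells [a, c]) z}"
    proof (cases "c < a \<and> z = (0, a-1)")
      case True
      show ?thesis unfolding mem_Collect_eq corner_def
      proof (intro conjI ballI impI)
        show "z \<in> cells [a, c]" using True by (auto simp: cells2_mem)
        fix v assume v: "v \<in> cells [a, c]" "v \<noteq> z"
        obtain i' j' where v': "v = (i', j')" by (cases v)
        show "\<not> weakly_nw z v" using v v' True by (auto simp: cells2_mem weakly_nw_def)
      qed
    next
      case False
      then have T: "1 \<le> c" "z = (1, c-1)" using z by (auto split: if_splits)
      show ?thesis unfolding mem_Collect_eq corner_def
      proof (intro conjI ballI impI)
        show "z \<in> cells [a, c]" using T by (auto simp: cells2_mem)
        fix v assume v: "v \<in> cells [a, c]" "v \<noteq> z"
        obtain i' j' where v': "v = (i', j')" by (cases v)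
        show "\<not> weakly_nw z v" using v v' T by (auto simp: cells2_mem weakly_nw_def)
      qed
    qed
  qed
qed

lemma cells2_minus_top: "c < a \<Longrightarrow> cells [a, c] - {(0, a-1)} = cells [a-1, c]"
  by (auto simp: cells2)
lemma cells2_minus_bot: "1 \<le> c \<Longrightarrow> cells [a, c] - {(1, c-1)} = cells [a, c-1]"
  by (auto simp: cells2)

definition G :: "nat \<Rightarrow> nat \<Rightarrow> nat \<Rightarrow> nat" where
  "G a c t = card (Yset t (cells [a, c]))"

lemma G_rec:
  assumes "c \<le> a"
  shows "G a c (Suc t) = (if c < a then G a c t + G (a-1) c t else 0) + (if 1 \<le> c then G a c t + G a (c-1) t else 0)"
proof -
  have "G a c (Suc t) = (\<Sum>z\<in>(if c < a then {(0::nat, a-1)} else {}) \<union> (if 1 \<le> c then {(1::nat, c-1)} else {}).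
          card (Yset t (cells [a, c] - {z})) + card (Yset t (cells [a, c])))"
    unfolding G_def using Yset_card_rec[OF finite_cells2, of "Suc t" a c] corners2[OF assms] by simp
  also have "\<dots> = (if c < a then G a c t + G (a-1) c t else 0) + (if 1 \<le> c then G a c t + G a (c-1) t else 0)"
    using cells2_minus_top[of c a] cells2_minus_bot[of c a] unfolding G_def by (auto simp: add.commute)
  finally show ?thesis .
qed

lemma G_vanish: "t < a + c \<Longrightarrow> G a c t = 0"
proof -
  assume "t < a + c"
  then have "Yset t (cells [a, c]) = {}" using Yset_card_le[OF _ finite_cells2] card_cells2 by fastforce
  then show ?thesis unfolding G_def by simp
qed

lemma G_000: "G 0 0 0 = 1"
proof -
  have "cells [0, 0] = {}" unfolding cells2 by simp
  moreover have "Yset 0 {} = {\<lambda>_. {}}"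
  proof
    show "Yset 0 {} \<subseteq> {\<lambda>_. {}}" using Yset_D1 by fastforce
    show "{\<lambda>_. {}} \<subseteq> Yset 0 {}" by (auto intro!: YsetI)
  qed
  ultimately show ?thesis unfolding G_def by simp
qed

definition Box :: "nat \<Rightarrow> (nat \<times> nat) set" where
  "Box t = {(a, c). c \<le> a \<and> a + c \<le> t}"

lemma finite_Box: "finite (Box t)"
proof -
  have "Box t \<subseteq> {..t} \<times> {..t}" unfolding Box_def by auto
  then show ?thesis using finite_subset by blast
qed

definition ncorn :: "nat \<Rightarrow> nat \<Rightarrow> int" where
  "ncorn a c = (if c < a then 1 else 0) + (if 1 \<le> c then 1 else 0)"

lemma G_rec_int:
  assumes "c \<le> a"
  shows "int (G a c (Suc t)) = ncorn a c * int (G a c t) + (if c < a then int (G (a-1) c t) else 0)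
     + (if 1 \<le> c then int (G a (c-1) t) else 0)"
  using G_rec[OF assms, of t] unfolding ncorn_def by auto

lemma invariance:
  fixes K :: "nat \<times> nat \<Rightarrow> nat \<Rightarrow> int"
  assumes rec: "\<And>a c L. c \<le> a \<Longrightarrow> K (a, c) (Suc L) =
      K (Suc a, c) L + (if c < a then K (a, Suc c) L else 0) + ncorn a c * K (a, c) L"
  shows "(\<Sum>(a, c)\<in>Box t. int (G a c t) * K (a, c) L) = K (0, 0) (t + L)"
proof (induction t arbitrary: L)
  case 0
  have "Box 0 = {(0, 0)}" unfolding Box_def by auto
  then show ?case using G_000 by simp
next
  case (Suc t)
  let ?B = "Box t" and ?B' = "Box (Suc t)"
  have "(\<Sum>(a, c)\<in>?B'. int (G a c (Suc t)) * K (a, c) L) =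
        (\<Sum>(a, c)\<in>?B'. ncorn a c * int (G a c t) * K (a, c) L
           + (if c < a then int (G (a-1) c t) * K (a, c) L else 0)
           + (if 1 \<le> c then int (G a (c-1) t) * K (a, c) L else 0))"
    by (rule sum.cong[OF refl]) (auto simp: G_rec_int Box_def algebra_simps)
  also have "\<dots> = (\<Sum>(a, c)\<in>?B'. ncorn a c * int (G a c t) * K (a, c) L)
      + (\<Sum>(a, c)\<in>?B'. (if c < a then int (G (a-1) c t) * K (a, c) L else 0))
      + (\<Sum>(a, c)\<in>?B'. (if 1 \<le> c then int (G a (c-1) t) * K (a, c) L else 0))"
    by (simp add: sum.distrib split_def)
  also have "(\<Sum>(a, c)\<in>?B'. ncorn a c * int (G a c t) * K (a, c) L)
      = (\<Sum>(a, c)\<in>?B. ncorn a c * int (G a c t) * K (a, c) L)"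
  proof (rule sum.mono_neutral_right[OF finite_Box])
    show "?B \<subseteq> ?B'" unfolding Box_def by auto
    show "\<forall>i\<in>?B' - ?B. (case i of (a, c) \<Rightarrow> ncorn a c * int (G a c t) * K (a, c) L) = 0"
    proof
      fix i assume i: "i \<in> ?B' - ?B"
      obtain a c where ac: "i = (a, c)" by (cases i)
      have "t < a + c" using i ac unfolding Box_def by auto
      then show "(case i of (a, c) \<Rightarrow> ncorn a c * int (G a c t) * K (a, c) L) = 0"
        using ac G_vanish by simp
    qed
  qed
  also have "(\<Sum>(a, c)\<in>?B'. (if c < a then int (G (a-1) c t) * K (a, c) L else 0))
      = (\<Sum>(a, c)\<in>?B. int (G a c t) * K (Suc a, c) L)"
  proof -
    have "(\<Sum>(a, c)\<in>?B'. (if c < a then int (G (a-1) c t) * K (a, c) L else 0))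
        = (\<Sum>(a, c)\<in>{p\<in>?B'. snd p < fst p}. int (G (a-1) c t) * K (a, c) L)"
      unfolding sum.inter_filter[OF finite_Box] by (rule sum.cong[OF refl]) auto
    also have "\<dots> = (\<Sum>(a, c)\<in>?B. int (G a c t) * K (Suc a, c) L)"
      by (rule sum.reindex_bij_witness[where j = "\<lambda>(a, c). (a - 1, c)" and i = "\<lambda>(a, c). (Suc a, c)"])
         (auto simp: Box_def)
    finally show ?thesis .
  qed
  also have "(\<Sum>(a, c)\<in>?B'. (if 1 \<le> c then int (G a (c-1) t) * K (a, c) L else 0))
      = (\<Sum>(a, c)\<in>?B. (if c < a then int (G a c t) * K (a, Suc c) L else 0))"
  proof -
    have "(\<Sum>(a, c)\<in>?B'. (if 1 \<le> c then int (G a (c-1) t) * K (a, c) L else 0))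
        = (\<Sum>(a, c)\<in>{p\<in>?B'. 1 \<le> snd p}. int (G a (c-1) t) * K (a, c) L)"
      unfolding sum.inter_filter[OF finite_Box] by (rule sum.cong[OF refl]) auto
    also have "\<dots> = (\<Sum>(a, c)\<in>{p\<in>?B. snd p < fst p}. int (G a c t) * K (a, Suc c) L)"
      by (rule sum.reindex_bij_witness[where j = "\<lambda>(a, c). (a, c - 1)" and i = "\<lambda>(a, c). (a, Suc c)"])
         (auto simp: Box_def)
    also have "\<dots> = (\<Sum>(a, c)\<in>?B. (if c < a then int (G a c t) * K (a, Suc c) L else 0))"
      unfolding sum.inter_filter[OF finite_Box] by (rule sum.cong[OF refl]) auto
    finally show ?thesis .
  qed
  also have "(\<Sum>(a, c)\<in>?B. ncorn a c * int (G a c t) * K (a, c) L)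
      + (\<Sum>(a, c)\<in>?B. int (G a c t) * K (Suc a, c) L)
      + (\<Sum>(a, c)\<in>?B. (if c < a then int (G a c t) * K (a, Suc c) L else 0))
      = (\<Sum>(a, c)\<in>?B. int (G a c t) * K (a, c) (Suc L))"
  proof -
    have "(\<Sum>(a, c)\<in>?B. int (G a c t) * K (a, c) (Suc L)) =
       (\<Sum>(a, c)\<in>?B. ncorn a c * int (G a c t) * K (a, c) L + int (G a c t) * K (Suc a, c) L
          + (if c < a then int (G a c t) * K (a, Suc c) L else 0))"
      by (rule sum.cong[OF refl]) (auto simp: rec Box_def algebra_simps)
    then show ?thesis by (simp add: sum.distrib split_def)
  qed
  also have "\<dots> = K (0, 0) (t + Suc L)" by (rule Suc.IH)
  finally show ?case by simp
qed


definition K0 :: "nat \<times> nat \<Rightarrow> nat \<Rightarrow> int" where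
  "K0 s L = (case s of (a, c) \<Rightarrow>
     if 1 \<le> c then P (int a - int c) (int L)
     else if 1 \<le> a then Q (int a) (int L)
     else if 1 \<le> L then Q 1 (int L - 1) else 0)"

definition K1 :: "nat \<times> nat \<Rightarrow> nat \<Rightarrow> int" where
  "K1 s L = (case s of (a, c) \<Rightarrow>
     if 1 \<le> c then int a * P (int a - int c) (int L) + PU (int a - int c) (int L)
     else if 1 \<le> a then int a * Q (int a) (int L) + QU (int a) (int L)
     else if 1 \<le> L then Q 1 (int L - 1) + QU 1 (int L - 1) else 0)"

lemma K0_rec:
  assumes "c \<le> a"
  shows "K0 (a, c) (Suc L) = K0 (Suc a, c) L + (if c < a then K0 (a, Suc c) L else 0) + ncorn a c * K0 (a, c) L"
proof -
  have L: "int (Suc L) = int L + 1" by simp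
  consider "1 \<le> c \<and> c < a" | "1 \<le> c \<and> c = a" | "c = 0 \<and> 1 \<le> a" | "c = 0 \<and> a = 0" using assms by linarith
  then show ?thesis
  proof cases
    case 1
    have h: "1 \<le> int a - int c" using 1 by simp
    have "P (int a - int c) (int L + 1) = 2 * P (int a - int c) (int L) + P (int a - int c + 1) (int L) + P (int a - int c - 1) (int L)"
      using P_rec[OF h] by simp
    then show ?thesis using 1 unfolding K0_def ncorn_def L by (simp add: algebra_simps)
  next
    case 2
    have "P 0 (int L + 1) = P 0 (int L) + P 1 (int L)" using P_rec0 by simp
    then show ?thesis using 2 unfolding K0_def ncorn_def L by (simp add: algebra_simps)
  next
    case 3
    have "Q (int a) (int L + 1) = Q (int a + 1) (int L) + Q (int a) (int L) + P (int a - 1) (int L)"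
      using Q_rec_all 3 by simp
    then show ?thesis using 3 unfolding K0_def ncorn_def L by (simp add: algebra_simps)
  next
    case 4
    then show ?thesis unfolding K0_def ncorn_def by simp
  qed
qed

lemma K1_rec:
  assumes "c \<le> a"
  shows "K1 (a, c) (Suc L) = K1 (Suc a, c) L + (if c < a then K1 (a, Suc c) L else 0) + ncorn a c * K1 (a, c) L"
proof -
  have L: "int (Suc L) = int L + 1" by simp
  consider "1 \<le> c \<and> c < a" | "1 \<le> c \<and> c = a" | "c = 0 \<and> 1 \<le> a" | "c = 0 \<and> a = 0" using assms by linarith
  then show ?thesis
  proof cases
    case 1
    have h: "1 \<le> int a - int c" using 1 by simp
    have p: "P (int a - int c) (int L + 1) = 2 * P (int a - int c) (int L) + P (int a - int c + 1) (int L) + P (int a - int c - 1) (int L)"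
      using P_rec[OF h] by simp
    have pu: "PU (int a - int c) (int L + 1) = 2 * PU (int a - int c) (int L) + PU (int a - int c + 1) (int L)
        + P (int a - int c + 1) (int L) + PU (int a - int c - 1) (int L)"
      using PU_rec_all[of "int a - int c" "int L"] h by simp
    show ?thesis using 1 p pu unfolding K1_def ncorn_def L by (simp add: algebra_simps)
  next
    case 2
    have p: "P 0 (int L + 1) = P 0 (int L) + P 1 (int L)" using P_rec0 by simp
    have pu: "PU 0 (int L + 1) = PU 0 (int L) + PU 1 (int L) + P 1 (int L)"
      using PU_rec_all[of 0 "int L"] by simp
    show ?thesis using 2 p pu unfolding K1_def ncorn_def L by (simp add: algebra_simps)
  next
    case 3
    have q: "Q (int a) (int L + 1) = Q (int a + 1) (int L) + Q (int a) (int L) + P (int a - 1) (int L)"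
      using Q_rec_all 3 by simp
    have qu: "QU (int a) (int L + 1) = QU (int a + 1) (int L) + Q (int a + 1) (int L) + QU (int a) (int L) + PU (int a - 1) (int L)"
      using QU_rec_all 3 by simp
    show ?thesis using 3 q qu unfolding K1_def ncorn_def L by (simp add: algebra_simps)
  next
    case 4
    then show ?thesis unfolding K1_def ncorn_def by simp
  qed
qed

lemma K0_zero: "c \<le> a \<Longrightarrow> K0 (a, c) 0 = (if 1 \<le> c \<and> c = a then 1 else 0)"
  unfolding K0_def P_def Q_def bb_def by auto

lemma K1_zero: "c \<le> a \<Longrightarrow> K1 (a, c) 0 = (if 1 \<le> c \<and> c = a then int a else 0)"
  unfolding K1_def P_def Q_def PU_def QU_def bb_def by auto

lemma Box_diag_sum:
  fixes f :: "nat \<Rightarrow> int"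
  shows "(\<Sum>(a, c)\<in>Box n. (if 1 \<le> c \<and> c = a then f a else 0)) = (\<Sum>b\<in>{b. 1 \<le> b \<and> 2*b \<le> n}. f b)"
proof -
  have "(\<Sum>(a, c)\<in>Box n. (if 1 \<le> c \<and> c = a then f a else 0))
      = (\<Sum>p\<in>{p\<in>Box n. 1 \<le> snd p \<and> snd p = fst p}. f (fst p))"
    unfolding sum.inter_filter[OF finite_Box] by (rule sum.cong[OF refl]) auto
  also have "\<dots> = (\<Sum>b\<in>{b. 1 \<le> b \<and> 2*b \<le> n}. f b)"
    by (rule sum.reindex_bij_witness[where j = "fst" and i = "\<lambda>b. (b, b)"]) (auto simp: Box_def)
  finally show ?thesis .
qed

lemma Gsum_K0: "(\<Sum>(a, c)\<in>Box n. int (G a c n) * K0 (a, c) 0) = (\<Sum>b\<in>{b. 1 \<le> b \<and> 2*b \<le> n}. int (G b b n))"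
proof -
  have "(\<Sum>(a, c)\<in>Box n. int (G a c n) * K0 (a, c) 0) = (\<Sum>(a, c)\<in>Box n. (if 1 \<le> c \<and> c = a then int (G a a n) else 0))"
    by (rule sum.cong[OF refl]) (auto simp: K0_zero Box_def)
  then show ?thesis using Box_diag_sum[where n=n and f="\<lambda>b. int (G b b n)"] by simp
qed

lemma Gsum_K1: "(\<Sum>(a, c)\<in>Box n. int (G a c n) * K1 (a, c) 0) = (\<Sum>b\<in>{b. 1 \<le> b \<and> 2*b \<le> n}. int b * int (G b b n))"
proof -
  have "(\<Sum>(a, c)\<in>Box n. int (G a c n) * K1 (a, c) 0) = (\<Sum>(a, c)\<in>Box n. (if 1 \<le> c \<and> c = a then int a * int (G a a n) else 0))"
    by (rule sum.cong[OF refl]) (auto simp: K1_zero Box_def)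
  then show ?thesis using Box_diag_sum[where n=n and f="\<lambda>b. int b * int (G b b n)"] by simp
qed

theorem theorem20:
  fixes n :: nat
  assumes "n \<ge> 3"
  shows "(\<Sum>(b, T)\<in>two_row_union n. real b) / real (card (two_row_union n))
           = (real n ^ 2 + real n - 6) / (4 * real n - 6)"
proof -
  let ?Bs = "{b. 1 \<le> b \<and> 2*b \<le> n}"
  have fBs: "finite ?Bs" by (rule finite_subset[of _ "{..n}"]) auto
  have U: "two_row_union n = Sigma ?Bs (\<lambda>b. Yset n (cells [b, b]))"
  proof -
    have "\<And>b. 2*b \<le> n \<Longrightarrow> SYT_plus (n - 2*b) [b, b] = Yset n (cells [b, b])"
      unfolding SYT_plus_Yset by simp
    then show ?thesis unfolding two_row_union_def by auto
  qed
  have fY: "\<And>b. finite (Yset n (cells [b, b]))" using finite_Yset[OF finite_cells2] by blast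
  have card_eq: "card (two_row_union n) = (\<Sum>b\<in>?Bs. G b b n)"
    unfolding U G_def using card_SigmaI[OF fBs, of "\<lambda>b. Yset n (cells [b, b])"] fY by simp
  have sum_eq: "(\<Sum>(b, T)\<in>two_row_union n. real b) = (\<Sum>b\<in>?Bs. real b * real (G b b n))"
  proof -
    have "(\<Sum>(b, T)\<in>two_row_union n. real b) = (\<Sum>b\<in>?Bs. \<Sum>T\<in>Yset n (cells [b, b]). real b)"
      unfolding U using sum.Sigma[OF fBs, of "\<lambda>b. Yset n (cells [b, b])" "\<lambda>b T. real b"] fY by simp
    then show ?thesis unfolding G_def by (simp add: mult.commute)
  qed
  have inv0: "(\<Sum>(a, c)\<in>Box n. int (G a c n) * K0 (a, c) 0) = K0 (0, 0) (n + 0)"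
    by (rule invariance) (rule K0_rec)
  have inv1: "(\<Sum>(a, c)\<in>Box n. int (G a c n) * K1 (a, c) 0) = K1 (0, 0) (n + 0)"
    by (rule invariance) (rule K1_rec)
  have n1: "1 \<le> n" using assms by simp
  have c0: "int (\<Sum>b\<in>?Bs. G b b n) = Q 1 (int n - 1)"
    using inv0 Gsum_K0[of n] n1 unfolding K0_def by simp
  have c1: "(\<Sum>b\<in>?Bs. int b * int (G b b n)) = Q 1 (int n - 1) + QU 1 (int n - 1)"
    using inv1 Gsum_K1[of n] n1 unfolding K1_def by simp
  have r0: "real (card (two_row_union n)) = real_of_int (Q 1 (int n - 1))"
  proof -
    have "real (card (two_row_union n)) = real (\<Sum>b\<in>?Bs. G b b n)" using card_eq by (simp only:)
    also have "\<dots> = real_of_int (int (\<Sum>b\<in>?Bs. G b b n))" by (simp only: of_int_of_nat_eq)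
    also have "\<dots> = real_of_int (Q 1 (int n - 1))" using c0 by (simp only:)
    finally show ?thesis .
  qed
  have r1: "(\<Sum>(b, T)\<in>two_row_union n. real b) = real_of_int (Q 1 (int n - 1)) + real_of_int (QU 1 (int n - 1))"
  proof -
    have "(\<Sum>b\<in>?Bs. real b * real (G b b n)) = real_of_int (\<Sum>b\<in>?Bs. int b * int (G b b n))" by simp
    also have "\<dots> = real_of_int (Q 1 (int n - 1) + QU 1 (int n - 1))" using c1 by (simp only:)
    finally show ?thesis using sum_eq by simp
  qed
  have m2: "2 \<le> int n - 1" using assms by simp
  have "real_of_int (int n - 1) + 1 = real n" by simp
  then show ?thesis unfolding r0 r1 using final_arith[OF m2] by simp
qed

end
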